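(* Let $p$ be a prime, $q=p^m$, $1\le r<p$, and let $d(p,m,r)$ be as defined in the context. For every $f(x)\in\mathbb{F}_q[x]$ with $1\le\deg f\le r$, the number $N_f$ of rational places of the function field $E_f=\mathbb{F}_q(x,y)$, $y^p-y=f(x)$, satisfies $$N_f\le 1+p\,(q-d(p,m,r)).$$ Moreover, there exists a polynomial $h(x)\in\mathbb{F}_q[x]$ of degree at most $r$ such that $N_h=1+p\,(q-d(p,m,r))$.
   Context: Enumerate $\mathbb{F}_q^*=\{\alpha_1,\dots,\alpha_{q-1}\}$ and fix an $\mathbb{F}_p$-linear isomorphism $\mathbb{F}_q\cong\mathbb{F}_p^m$. Let $A\in\mathbb{F}_p^{rm\times(q-1)}$ be the matrix whose $j$-th column is the concatenation of the coordinate vectors of $\alpha_j,\alpha_j^2,\dots,\alpha_j^r$. Let $C\subseteq\mathbb{F}_p^{q-1}$ be the row space of $A$ over $\mathbb{F}_p$, and $d(p,m,r)$ the minimum Hamming distance of $C$ (independent of the choices, up to code equivalence). A rational place is a place of degree one; equivalently $N_f=1+p\cdot|\{\beta\in\mathbb{F}_q:\mathrm{Tr}_{\mathbb{F}_q/\mathbb{F}_p}(f(\beta))=0\}|$. *)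

theory Defs
  imports "HOL-Computational_Algebra.Polynomial"
begin

definition prime_subfield :: "'a::{field,finite} set" where
  "prime_subfield = range (of_nat :: nat \<Rightarrow> 'a)"

definition trace :: "nat \<Rightarrow> nat \<Rightarrow> 'a::{field,finite} \<Rightarrow> 'a" where
  "trace p m x = (\<Sum>i<m. x ^ (p ^ i))"

text \<open>Number of rational places of E_f: y^p - y = f(x), via
  N_f = 1 + p * #{beta in F_q : Tr(f(beta)) = 0}.\<close>
definition N_places :: "nat \<Rightarrow> nat \<Rightarrow> 'a::{field,finite} poly \<Rightarrow> nat" where
  "N_places p m f = 1 + p * card {\<beta>::'a. trace p m (poly f \<beta>) = 0}"

text \<open>An F_p-linear isomorphism F_q \<cong> F_p^m, given as coordinate functions:
  coord x i is the i-th coordinate (i < m) of x, lying in the prime subfield.\<close>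
definition is_coord :: "nat \<Rightarrow> ('a::{field,finite} \<Rightarrow> nat \<Rightarrow> 'a) \<Rightarrow> bool" where
  "is_coord m coord \<longleftrightarrow>
     (\<forall>x i. coord x i \<in> prime_subfield) \<and>
     (\<forall>x i. m \<le> i \<longrightarrow> coord x i = 0) \<and>
     (\<forall>x y i. coord (x + y) i = coord x i + coord y i) \<and>
     (\<forall>c\<in>prime_subfield. \<forall>x i. coord (c * x) i = c * coord x i) \<and>
     inj coord"

text \<open>The code C: row space over F_p of the rm x (q-1) matrix A whose column at
  alpha in F_q^* is the concatenation of the coordinate vectors of alpha, ..., alpha^r.
  Codewords are represented as functions on F_q^* (extended by 0 at 0); the row
  indexed by (k,i) is alpha \<mapsto> coord (alpha^k) i.\<close>
definition code :: "nat \<Rightarrow> nat \<Rightarrow> ('a::{field,finite} \<Rightarrow> nat \<Rightarrow> 'a) \<Rightarrow> ('a \<Rightarrow> 'a) set" where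
  "code m r coord =
     {c. \<exists>lam::nat \<Rightarrow> nat \<Rightarrow> 'a. (\<forall>k i. lam k i \<in> prime_subfield) \<and>
          c = (\<lambda>\<alpha>. if \<alpha> = 0 then 0
                   else (\<Sum>k\<in>{1..r}. \<Sum>i<m. lam k i * coord (\<alpha> ^ k) i))}"

definition hamming :: "('a::{field,finite} \<Rightarrow> 'a) \<Rightarrow> ('a \<Rightarrow> 'a) \<Rightarrow> nat" where
  "hamming c c' = card {\<alpha>. \<alpha> \<noteq> 0 \<and> c \<alpha> \<noteq> c' \<alpha>}"

definition min_dist :: "nat \<Rightarrow> nat \<Rightarrow> ('a::{field,finite} \<Rightarrow> nat \<Rightarrow> 'a) \<Rightarrow> nat" where
  "min_dist m r coord =
     Min {hamming c c' | c c'. c \<in> code m r coord \<and> c' \<in> code m r coord \<and> c \<noteq> c'}"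

end

theory Submission imports Defs "HOL-Number_Theory.Residues" "HOL-Library.FuncSet"
begin

locale ctx =
  fixes p m :: nat and coord :: "'a::{field,finite} \<Rightarrow> nat \<Rightarrow> 'a"
  assumes pr: "prime p" and cardq: "card (UNIV :: 'a set) = p ^ m"
    and isc: "is_coord m coord"
begin

abbreviation Tr where "Tr \<equiv> (trace p m :: 'a \<Rightarrow> 'a)"
abbreviation F where "F \<equiv> (prime_subfield :: 'a set)"

lemma p2: "p \<ge> 2" using pr prime_ge_2_nat by blast

lemma CHARp: "CHAR('a) = p"
proof -
  have pos: "CHAR('a) > 0" by (simp add: finite_imp_CHAR_pos)
  hence "prime CHAR('a)" using prime_CHAR_semidom by blast
  moreover have "CHAR('a) dvd p ^ m" using CHAR_dvd_CARD[where 'a='a] cardq by simp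
  ultimately have "CHAR('a) dvd p" using prime_dvd_power by blast
  thus ?thesis using \<open>prime CHAR('a)\<close> pr primes_dvd_imp_eq by blast
qed

lemma primeCHAR: "prime CHAR('a)" using CHARp pr by simp

lemma m1: "m \<ge> 1"
proof (rule ccontr)
  assume "\<not> m \<ge> 1" hence "card (UNIV :: 'a set) = 1" using cardq by simp
  then obtain z where "(UNIV::'a set) = {z}" using card_1_singletonE by blast
  hence "(0::'a) = 1" by (metis UNIV_I singletonD)
  thus False by simp
qed

lemma pow_q: "(x::'a) ^ (p ^ m) = x"
proof (cases "x = 0")
  case False
  have "x * (\<Prod>y\<in>UNIV-{0}. x * y) = x * x ^ (card (UNIV :: 'a set) - 1) * \<Prod>(UNIV-{0})"
    by (simp add: prod.distrib mult_ac)
  also have "x * x ^ (card (UNIV :: 'a set) - 1) = x ^ Suc (card (UNIV :: 'a set) - 1)"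
    by (subst power_Suc) auto
  also have "Suc (card (UNIV :: 'a set) - 1) = card (UNIV :: 'a set)"
    using finite_UNIV_card_ge_0[where ?'a = 'a] by simp
  also have "(\<Prod>y\<in>UNIV-{0}. x * y) = (\<Prod>y\<in>UNIV-{0}. y)"
    by (rule prod.reindex_bij_witness[of _ "\<lambda>y. y / x" "\<lambda>y. x * y"]) (use False in auto)
  finally show ?thesis using cardq
    by simp
qed (use m1 p2 in auto)

lemma frob_add: "((x::'a) + y) ^ (p ^ i) = x ^ (p ^ i) + y ^ (p ^ i)"
  using freshmans_dream'[OF primeCHAR, of "p^i" i] CHARp by simp

lemma frob_sum: "(sum (f::'b \<Rightarrow> 'a) A) ^ (p ^ i) = sum (\<lambda>k. f k ^ (p ^ i)) A"
  using freshmans_dream_sum'[OF primeCHAR, of "p^i" i] CHARp by simp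

lemma of_nat_pow: "(of_nat n :: 'a) ^ p = of_nat n"
proof (induction n)
  case 0 then show ?case using p2 by simp
next
  case (Suc n)
  have "(of_nat (Suc n) :: 'a) ^ p = (of_nat n + 1) ^ (p ^ 1)" by (simp add: add.commute)
  also have "\<dots> = of_nat n ^ p + 1" using frob_add[of "of_nat n" 1 1] by simp
  finally show ?case using Suc by simp
qed

lemma F_pow: "c \<in> F \<Longrightarrow> c ^ (p ^ i) = c"
proof (induction i)
  case 0 then show ?case by simp
next
  case (Suc i)
  then obtain n where c: "c = of_nat n" by (auto simp: prime_subfield_def)
  have "c ^ (p ^ Suc i) = (c ^ p) ^ (p ^ i)" by (simp add: power_mult[symmetric] mult.commute)
  also have "\<dots> = c ^ (p ^ i)" using of_nat_pow c by simp
  finally show ?case using Suc by simp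
qed

lemma F_eq: "F = of_nat ` {..<p}"
proof
  show "F \<subseteq> of_nat ` {..<p}"
  proof
    fix c assume "c \<in> F"
    then obtain n where c: "c = of_nat n" by (auto simp: prime_subfield_def)
    have "(of_nat n :: 'a) = of_nat (n mod p)"
      using of_nat_eq_iff_cong_CHAR[where 'a='a] CHARp by (simp add: cong_def)
    moreover have "n mod p < p" using p2 by simp
    ultimately show "c \<in> of_nat ` {..<p}" using c by blast
  qed
qed (auto simp: prime_subfield_def)

lemma card_F: "card F = p"
proof -
  have "inj_on (of_nat :: nat \<Rightarrow> 'a) {..<p}"
  proof (rule inj_onI)
    fix a b assume "a \<in> {..<p}" "b \<in> {..<p}" "(of_nat a :: 'a) = of_nat b"
    thus "a = b" using of_nat_eq_iff_cong_CHAR[where 'a='a] CHARp by (simp add: cong_def)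
  qed
  thus ?thesis using F_eq card_image by fastforce
qed

lemma pow_F: assumes "(y::'a) ^ p = y" shows "y \<in> F"
proof -
  define P :: "'a poly" where "P = Polynomial.monom 1 p - [:0,1:]"
  have degP: "degree P = p" unfolding P_def using p2
    by (simp only: diff_conv_add_uminus, subst degree_add_eq_left) (auto simp: degree_monom_eq)
  hence "P \<noteq> 0" using p2 by auto
  have roots: "{x. poly P x = 0} = {x. x ^ p = x}" by (auto simp: P_def poly_monom)
  have "F \<subseteq> {x. x ^ p = x}" using F_pow[of _ 1] by auto
  moreover have "card {x::'a. x ^ p = x} \<le> p"
    using card_poly_roots_bound[OF \<open>P \<noteq> 0\<close>] roots degP by simp
  ultimately have "F = {x. x ^ p = x}"
    using card_F by (intro card_subset_eq) (auto intro!: Orderings.antisym card_mono)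
  thus ?thesis using assms by auto
qed

lemma F_minus: "a \<in> F \<Longrightarrow> b \<in> F \<Longrightarrow> a - b \<in> F"
proof -
  assume a: "a \<in> F" and b: "b \<in> F"
  have "(a - b) ^ p = a ^ p + (- b) ^ p" using frob_add[of a "-b" 1] by simp
  also have "(-b) ^ p = - (b ^ p)" using minus_power_prime_CHAR[of p b] CHARp pr by simp
  finally show ?thesis using F_pow[OF a, of 1] F_pow[OF b, of 1] by (intro pow_F) simp
qed

lemma F_0: "0 \<in> F" and F_1: "1 \<in> F"
  unfolding prime_subfield_def by (metis of_nat_0 rangeI, metis of_nat_1 rangeI)


lemma Tr_add: "Tr (x + y) = Tr x + Tr y"
  by (simp add: trace_def frob_add sum.distrib)

lemma Tr_sum: "Tr (sum f A) = (\<Sum>k\<in>A. Tr (f k))"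
  unfolding trace_def frob_sum by (rule sum.swap)

lemma Tr_0: "Tr 0 = 0" unfolding trace_def using p2 by (simp add: power_0_left)

lemma Tr_smult: "c \<in> F \<Longrightarrow> Tr (c * x) = c * Tr x"
  unfolding trace_def by (simp add: power_mult_distrib F_pow sum_distrib_left)

lemma Tr_F: "Tr x \<in> F"
proof (rule pow_F)
  have "Tr x ^ p = (\<Sum>i<m. x ^ (p ^ Suc i))"
    unfolding trace_def using frob_sum[of "\<lambda>i. x ^ p ^ i" "{..<m}" 1]
    by (simp add: power_mult[symmetric] mult.commute)
  also have "\<dots> = (\<Sum>i<Suc m. x ^ (p ^ i)) - x ^ (p ^ 0)"
    by (subst sum.lessThan_Suc_shift) simp
  also have "\<dots> = Tr x" unfolding trace_def by (simp add: pow_q)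
  finally show "Tr x ^ p = Tr x" .
qed

lemma coord_add: "coord (x + y) i = coord x i + coord y i"
  using isc by (simp add: is_coord_def)

lemma coord_0: "coord 0 i = 0"
proof -
  have "coord (0 + 0) i = coord 0 i + coord 0 i" by (rule coord_add)
  thus ?thesis by (metis add.right_neutral add_0 add_left_cancel)
qed

lemma coord_smult: "c \<in> F \<Longrightarrow> coord (c * x) i = c * coord x i"
  using isc by (simp add: is_coord_def)

lemma coord_F: "coord x i \<in> F" using isc by (simp add: is_coord_def)

lemma coord_high: "m \<le> i \<Longrightarrow> coord x i = 0" using isc by (simp add: is_coord_def)

lemma coord_inj: "coord x = coord y \<Longrightarrow> x = y" using isc by (auto simp: is_coord_def inj_def)

lemma coord_sum: "finite A \<Longrightarrow> coord (sum f A) i = (\<Sum>k\<in>A. coord (f k) i)"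
  by (induction A rule: finite_induct) (auto simp: coord_0 coord_add)

definition V :: "(nat \<Rightarrow> 'a) set" where
  "V = {v. (\<forall>i. v i \<in> F) \<and> (\<forall>i. m \<le> i \<longrightarrow> v i = 0)}"

lemma card_V: "card V = p ^ m"
proof -
  have "bij_betw (\<lambda>v. restrict v {..<m}) V (PiE {..<m} (\<lambda>_. F))"
  proof (rule bij_betw_byWitness[where f' = "\<lambda>w i. if i < m then w i else 0"])
    show "\<forall>a\<in>V. (\<lambda>i. if i < m then restrict a {..<m} i else 0) = a"
      by (auto simp: V_def fun_eq_iff)
    show "\<forall>a'\<in>PiE {..<m} (\<lambda>_. F). restrict (\<lambda>i. if i < m then a' i else 0) {..<m} = a'"
      by (auto simp: fun_eq_iff PiE_def extensional_def)
    show "(\<lambda>v. restrict v {..<m}) ` V \<subseteq> PiE {..<m} (\<lambda>_. F)"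
    proof (rule image_subsetI)
      fix v assume "v \<in> V"
      thus "restrict v {..<m} \<in> PiE {..<m} (\<lambda>_. F)"
        by (intro restrict_PiE_iff[THEN iffD2]) (auto simp: V_def)
    qed
    show "(\<lambda>w i. if i < m then w i else 0) ` PiE {..<m} (\<lambda>_. F) \<subseteq> V"
      by (auto simp: V_def F_0 PiE_def Pi_def)
  qed
  hence "card V = card (PiE {..<m} (\<lambda>_. F))" by (rule bij_betw_same_card)
  also have "\<dots> = p ^ m" by (simp add: card_PiE card_F)
  finally show ?thesis .
qed

lemma finite_V: "finite V"
  using card_V p2 by (intro card_ge_0_finite) simp

lemma range_coord: "range coord = V"
proof (rule card_subset_eq[OF finite_V])
  show "range coord \<subseteq> V" by (auto simp: V_def coord_F coord_high)
  have "inj coord" using isc by (simp add: is_coord_def)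
  hence "card (range coord) = card (UNIV :: 'a set)" by (simp add: card_image)
  thus "card (range coord) = card V" using cardq card_V by simp
qed

definition u :: "nat \<Rightarrow> 'a" where
  "u i = inv_into UNIV coord (\<lambda>j. if j = i then 1 else 0)"

lemma coord_u: "i < m \<Longrightarrow> coord (u i) = (\<lambda>j. if j = i then 1 else 0)"
proof -
  assume "i < m"
  hence "(\<lambda>j. if j = i then 1 else (0::'a)) \<in> range coord"
    unfolding range_coord V_def by (auto simp: F_0 F_1)
  thus ?thesis unfolding u_def by (rule f_inv_into_f)
qed

lemma decomp: "x = (\<Sum>i<m. coord x i * u i)"
proof (rule coord_inj, rule ext)
  fix j
  have "coord (\<Sum>i<m. coord x i * u i) j = (\<Sum>i<m. coord x i * coord (u i) j)"
    by (simp add: coord_sum coord_smult coord_F)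
  also have "\<dots> = (\<Sum>i<m. if i = j then coord x i else 0)"
    by (intro sum.cong) (auto simp: coord_u)
  also have "\<dots> = coord x j" by (auto simp: coord_high)
  finally show "coord x j = coord (\<Sum>i<m. coord x i * u i) j" by simp
qed

lemma Tr_coord: "Tr (a * x) = (\<Sum>i<m. Tr (a * u i) * coord x i)"
proof -
  have "Tr (a * x) = Tr (\<Sum>i<m. coord x i * (a * u i))"
    by (subst decomp[of x]) (simp add: sum_distrib_left mult_ac)
  also have "\<dots> = (\<Sum>i<m. coord x i * Tr (a * u i))"
    by (simp add: Tr_sum Tr_smult coord_F)
  finally show ?thesis by (simp add: mult.commute)
qed


definition TrP :: "'a poly \<Rightarrow> nat \<Rightarrow> 'a poly" where
  "TrP g n = (\<Sum>i<n. g ^ (p ^ i))"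

lemma poly_TrP: "poly (TrP g m) x = Tr (poly g x)"
  by (simp add: TrP_def trace_def poly_sum)

lemma degree_TrP: assumes "g \<noteq> 0" "n \<ge> 1" "degree g \<ge> 1" shows "degree (TrP g n) = degree g * p ^ (n - 1)"
  using assms(2)
proof (induction n)
  case 0 then show ?case by simp
next
  case (Suc n)
  show ?case
  proof (cases "n = 0")
    case True then show ?thesis by (simp add: TrP_def)
  next
    case False
    hence IH: "degree (TrP g n) = degree g * p ^ (n - 1)" using Suc by simp
    have dg: "degree (g ^ (p ^ n)) = degree g * p ^ n" using assms(1) by (simp add: degree_power_eq)
    have "p ^ (n - 1) < p ^ n" using p2 False by (intro power_strict_increasing) auto
    have "degree (TrP g n) < degree (g ^ (p ^ n))" unfolding IH dg
      using \<open>p ^ (n - 1) < p ^ n\<close> assms(3) by (intro mult_strict_left_mono) auto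
    hence "degree (TrP g n + g ^ (p ^ n)) = degree (g ^ (p ^ n))" by (rule degree_add_eq_right)
    thus ?thesis using dg by (simp add: TrP_def)
  qed
qed

lemma NV: assumes "1 \<le> degree g" "degree g < p" shows "\<exists>x. Tr (poly g x) \<noteq> t"
proof (rule ccontr)
  assume "\<not> (\<exists>x. Tr (poly g x) \<noteq> t)"
  hence all: "\<forall>x. Tr (poly g x) = t" by blast
  define Q where "Q = TrP g m + (- [:t:])"
  have g0: "g \<noteq> 0" using assms by auto
  have dT: "degree (TrP g m) = degree g * p ^ (m - 1)" using degree_TrP[OF g0 m1 assms(1)] .
  have "p ^ (m - 1) \<ge> 1" using p2 by simp
  hence "1 * 1 \<le> degree g * p ^ (m - 1)" using assms(1) by (intro mult_le_mono) auto
  hence dpos: "degree (TrP g m) \<ge> 1" using dT by simp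
  have dQ: "degree Q = degree (TrP g m)" unfolding Q_def
    by (rule degree_add_eq_left) (use dpos in simp)
  hence "Q \<noteq> 0" using dpos by auto
  have "{x. poly Q x = 0} = UNIV" using all by (auto simp: Q_def poly_TrP)
  hence "p ^ m \<le> degree Q" using card_poly_roots_bound[OF \<open>Q \<noteq> 0\<close>] cardq by simp
  moreover have "degree Q < p ^ m"
  proof -
    have "degree Q = degree g * p ^ (m - 1)" using dQ dT by simp
    also have "\<dots> < p * p ^ (m - 1)" using assms(2) p2 by simp
    also have "\<dots> = p ^ m" using m1 by (metis Suc_diff_le diff_Suc_1 power_Suc)
    finally show ?thesis .
  qed
  ultimately show False by simp
qed

lemma poly_upto: assumes "degree (g::'a poly) \<le> r" shows "poly g x = (\<Sum>k\<le>r. poly.coeff g k * x ^ k)"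
  apply (subst Polynomial.poly_altdef)
  apply (rule sum.mono_neutral_left)
  using assms by (auto simp: coeff_eq_0)

lemma CW: assumes "degree g \<le> r"
  shows "(\<lambda>\<alpha>. if \<alpha> = 0 then 0 else Tr (poly g \<alpha>) - Tr (poly g 0)) \<in> code m r coord"
proof -
  define lam where "lam k i = Tr (poly.coeff g k * u i)" for k i
  have eq: "Tr (poly g \<alpha>) - Tr (poly g 0) = (\<Sum>k\<in>{1..r}. \<Sum>i<m. lam k i * coord (\<alpha> ^ k) i)" for \<alpha>
  proof -
    have s: "{..r} = insert 0 {1..r}" by auto
    have "poly g \<alpha> = poly.coeff g 0 + (\<Sum>k\<in>{1..r}. poly.coeff g k * \<alpha> ^ k)"
      using poly_upto[OF assms, of \<alpha>] by (simp add: s)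
    hence "Tr (poly g \<alpha>) = Tr (poly g 0) + (\<Sum>k\<in>{1..r}. Tr (poly.coeff g k * \<alpha> ^ k))"
      by (simp add: Tr_add Tr_sum poly_0_coeff_0)
    also have "(\<Sum>k\<in>{1..r}. Tr (poly.coeff g k * \<alpha> ^ k)) = (\<Sum>k\<in>{1..r}. \<Sum>i<m. lam k i * coord (\<alpha> ^ k) i)"
      unfolding lam_def by (intro sum.cong refl Tr_coord)
    finally show ?thesis by simp
  qed
  show ?thesis unfolding code_def
  proof (rule CollectI, rule exI[of _ lam], intro conjI allI)
    show "lam k i \<in> F" for k i by (simp add: lam_def Tr_F)
  qed (simp add: eq fun_eq_iff)
qed


lemma Tr_nonzero: "\<exists>y. Tr y \<noteq> 0"
  using NV[of "[:0,1:]" 0] p2 by auto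

lemma Tr_inj: assumes "\<forall>x. Tr (a * x) = Tr (b * x)" shows "a = b"
proof (rule ccontr)
  assume ne: "a \<noteq> b"
  obtain y where y: "Tr y \<noteq> 0" using Tr_nonzero by blast
  define x where "x = y / (a - b)"
  have "(a - b) * x = y" using ne by (simp add: x_def)
  have "Tr (a * x) = Tr ((a - b) * x + b * x)" by (simp add: algebra_simps)
  also have "\<dots> = Tr y + Tr (b * x)" by (simp add: Tr_add \<open>(a - b) * x = y\<close>)
  finally show False using assms y by simp
qed

definition psi :: "(nat \<Rightarrow> 'a) \<Rightarrow> 'a \<Rightarrow> 'a" where
  "psi w = (\<lambda>x. \<Sum>i<m. w i * coord x i)"

lemma psi_restrict: "psi (restrict w {..<m}) = psi w"
  unfolding psi_def by (intro ext sum.cong) auto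

lemma CV: assumes "\<forall>i. w i \<in> F" shows "\<exists>a. \<forall>x. psi w x = Tr (a * x)"
proof -
  define T where "T = range (\<lambda>a x. Tr (a * x))"
  define L where "L = psi ` (PiE {..<m} (\<lambda>_. F))"
  have TL: "T \<subseteq> L"
  proof
    fix t assume "t \<in> T"
    then obtain a where t: "t = (\<lambda>x. Tr (a * x))" by (auto simp: T_def)
    have "t = psi (\<lambda>i. Tr (a * u i))"
      unfolding t psi_def by (intro ext Tr_coord)
    hence "t = psi (restrict (\<lambda>i. Tr (a * u i)) {..<m})" by (simp only: psi_restrict)
    moreover have "restrict (\<lambda>i. Tr (a * u i)) {..<m} \<in> PiE {..<m} (\<lambda>_. F)"
      by (intro restrict_PiE_iff[THEN iffD2]) (auto simp: Tr_F)
    ultimately show "t \<in> L" unfolding L_def by blast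
  qed
  have finL: "finite L" unfolding L_def
    by (intro finite_imageI finite_PiE) auto
  have "card L \<le> card (PiE {..<m} (\<lambda>_. F))" unfolding L_def by (rule card_image_le) (intro finite_PiE, auto)
  also have "\<dots> = p ^ m" by (simp add: card_PiE card_F)
  finally have cL: "card L \<le> p ^ m" .
  have "inj (\<lambda>a x. Tr (a * x))"
    by (rule injI) (metis Tr_inj)
  hence cT: "card T = p ^ m" unfolding T_def using cardq by (simp add: card_image)
  have "T = L" using TL finL cT cL card_mono[OF finL TL] by (intro card_subset_eq) auto
  moreover have "psi w \<in> L" unfolding L_def psi_restrict[symmetric, of w]
    using assms by (intro imageI restrict_PiE_iff[THEN iffD2]) auto
  ultimately show ?thesis unfolding T_def by auto
qed


lemma shift_card: "card {\<beta>::'b::ab_group_add. P \<beta>} = card {\<alpha>. P (b + \<alpha>)}"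
proof -
  have "{\<beta>. P \<beta>} = (\<lambda>x. b + x) ` {\<alpha>. P (b + \<alpha>)}"
    by (rule Set.set_eqI) (metis (mono_tags, lifting) diff_add_cancel add.commute imageE image_eqI mem_Collect_eq)
  thus ?thesis by (simp add: card_image inj_on_def)
qed

lemma ZC: assumes "c 0 = 0"
  shows "card {\<alpha>::'a. c \<alpha> = 0} = p ^ m - hamming c (\<lambda>_. 0)"
proof -
  have "{\<alpha>::'a. c \<alpha> = 0} = UNIV - {\<alpha>. \<alpha> \<noteq> 0 \<and> c \<alpha> \<noteq> 0}" using assms by auto
  thus ?thesis unfolding hamming_def using cardq by (simp add: card_Diff_subset)
qed

context
  fixes r :: nat
  assumes r1: "1 \<le> r" and rp: "r < p"
begin

abbreviation C where "C \<equiv> code m r coord"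
abbreviation d where "d \<equiv> min_dist m r coord"
abbreviation SS where "SS \<equiv> {hamming c c' | c c'. c \<in> C \<and> c' \<in> C \<and> c \<noteq> c'}"

lemma zero_C: "(\<lambda>_. 0) \<in> C"
proof -
  have "(\<lambda>\<alpha>::'a. if \<alpha> = 0 then 0 else Tr (poly 0 \<alpha>) - Tr (poly 0 0)) = (\<lambda>_. 0)" by (rule ext) simp
  thus ?thesis using CW[of 0 r] by simp
qed

lemma ham_le: "hamming (c::'a\<Rightarrow>'a) c' \<le> p ^ m"
  unfolding hamming_def cardq[symmetric] by (intro card_mono) auto

lemma finSS: "finite SS"
  by (rule finite_subset[of _ "{..p^m}"]) (auto simp: ham_le)

lemma d_le: "(c::'a\<Rightarrow>'a) \<in> C \<Longrightarrow> c' \<in> C \<Longrightarrow> c \<noteq> c' \<Longrightarrow> d \<le> hamming c c'"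
  unfolding min_dist_def by (rule Min_le[OF finSS]) blast

lemma SS_ne: "SS \<noteq> {}"
proof -
  let ?c = "\<lambda>\<alpha>. if \<alpha> = 0 then 0 else Tr (poly [:0,1:] \<alpha>) - Tr (poly [:0,1:] 0)"
  have "?c \<in> C" using CW[of "[:0,1:]" r] r1 by simp
  moreover obtain y where y: "Tr y \<noteq> 0" using Tr_nonzero by blast
  hence "y \<noteq> 0" using Tr_0 by auto
  hence "?c \<noteq> (\<lambda>_. 0)" using y Tr_0 by (auto simp: fun_eq_iff)
  ultimately show ?thesis using zero_C by blast
qed

lemma d_in: "d \<in> SS"
  unfolding min_dist_def by (rule Min_in[OF finSS SS_ne])

lemma d_le_q: "d \<le> p ^ m" using d_in ham_le by auto

lemma part1: assumes "1 \<le> degree f" "degree f \<le> r"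
  shows "card {\<beta>::'a. Tr (poly f \<beta>) = 0} \<le> p ^ m - d"
proof (cases "{\<beta>::'a. Tr (poly f \<beta>) = 0} = {}")
  case True then show ?thesis by simp
next
  case False
  then obtain b where b: "Tr (poly f b) = 0" by auto
  define g where "g = pcompose f [:b,1:]"
  have pg: "poly g x = poly f (b + x)" for x by (simp add: g_def poly_pcompose)
  have dg: "degree g = degree f" by (simp add: g_def degree_pcompose)
  define c where "c = (\<lambda>\<alpha>. if \<alpha> = 0 then 0 else Tr (poly g \<alpha>) - Tr (poly g 0))"
  have cC: "c \<in> C" unfolding c_def using CW[of g r] dg assms by simp
  have g0: "Tr (poly g 0) = 0" using pg b by simp
  obtain x where x: "Tr (poly g x) \<noteq> 0" using NV[of g 0] dg assms rp by auto
  hence "x \<noteq> 0" using g0 by auto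
  hence "c \<noteq> (\<lambda>_. 0)" using x g0 by (auto simp: c_def fun_eq_iff)
  hence dh: "d \<le> hamming c (\<lambda>_. 0)" using d_le cC zero_C by blast
  have Zc: "{\<alpha>. c \<alpha> = 0} = {\<alpha>. Tr (poly f (b + \<alpha>)) = 0}"
    using g0 by (auto simp: c_def pg[symmetric])
  have "card {\<beta>. Tr (poly f \<beta>) = 0} = card {\<alpha>. c \<alpha> = 0}"
    unfolding Zc by (rule shift_card)
  also have "\<dots> = p ^ m - hamming c (\<lambda>_. 0)" by (rule ZC) (simp add: c_def)
  finally show ?thesis using dh by simp
qed

lemma part2: "\<exists>h::'a poly. degree h \<le> r \<and> card {\<beta>. Tr (poly h \<beta>) = 0} = p ^ m - d"
proof -
  obtain c c' where cc: "c \<in> C" "c' \<in> C" "c \<noteq> c'" "d = hamming c c'" using d_in by blast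
  obtain lam where lam: "\<forall>k i. lam k i \<in> F"
    "c = (\<lambda>\<alpha>. if \<alpha> = 0 then 0 else (\<Sum>k\<in>{1..r}. \<Sum>i<m. lam k i * coord (\<alpha> ^ k) i))"
    using cc(1) unfolding code_def by blast
  obtain lam' where lam': "\<forall>k i. lam' k i \<in> F"
    "c' = (\<lambda>\<alpha>. if \<alpha> = 0 then 0 else (\<Sum>k\<in>{1..r}. \<Sum>i<m. lam' k i * coord (\<alpha> ^ k) i))"
    using cc(2) unfolding code_def by blast
  have "\<forall>k. \<exists>a. \<forall>x. psi (\<lambda>i. lam k i - lam' k i) x = Tr (a * x)"
  proof
    fix k show "\<exists>a. \<forall>x. psi (\<lambda>i. lam k i - lam' k i) x = Tr (a * x)"
      by (rule CV) (use lam(1) lam'(1) F_minus in auto)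
  qed
  then obtain a where a: "\<And>k x. psi (\<lambda>i. lam k i - lam' k i) x = Tr (a k * x)"
    by (rule choice[THEN exE]) blast
  define h where "h = (\<Sum>k\<in>{1..r}. Polynomial.monom (a k) k)"
  have dh: "degree h \<le> r" unfolding h_def
    by (rule degree_sum_le) (simp, metis atLeastAtMost_iff degree_monom_le le_trans)
  define e where "e = (\<lambda>\<alpha>. c \<alpha> - c' \<alpha>)"
  have "Tr (poly h x) = e x" for x
  proof (cases "x = 0")
    case True
    have "poly h 0 = 0" unfolding h_def by (simp add: poly_sum poly_monom)
    thus ?thesis using True by (simp add: e_def lam(2) lam'(2) Tr_0)
  next
    case False
    have "Tr (poly h x) = (\<Sum>k\<in>{1..r}. Tr (a k * x ^ k))"
      unfolding h_def by (simp add: poly_sum poly_monom Tr_sum)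
    also have "\<dots> = (\<Sum>k\<in>{1..r}. \<Sum>i<m. (lam k i - lam' k i) * coord (x ^ k) i)"
      by (intro sum.cong refl) (simp add: a[symmetric] psi_def)
    also have "\<dots> = e x" using False
      by (simp add: e_def lam(2) lam'(2) left_diff_distrib sum_subtractf)
    finally show ?thesis .
  qed
  hence "{\<beta>. Tr (poly h \<beta>) = 0} = {\<alpha>. e \<alpha> = 0}" by auto
  moreover have "card {\<alpha>. e \<alpha> = 0} = p ^ m - hamming e (\<lambda>_. 0)"
    by (rule ZC) (simp add: e_def lam(2) lam'(2))
  moreover have "hamming e (\<lambda>_. 0) = d" unfolding cc(4) hamming_def e_def by simp
  ultimately have "card {\<beta>. Tr (poly h \<beta>) = 0} = p ^ m - d" by simp
  thus ?thesis using dh by blast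
qed

end

end

theorem theorem4p3:
  fixes p m r :: nat
    and coord :: "'a::{field,finite} \<Rightarrow> nat \<Rightarrow> 'a"
  assumes "prime p"
    and "card (UNIV :: 'a set) = p ^ m"
    and "1 \<le> r" and "r < p"
    and "is_coord m coord"
  shows "(\<forall>f :: 'a poly. 1 \<le> degree f \<and> degree f \<le> r \<longrightarrow>
            int (N_places p m f) \<le> 1 + int p * (int (card (UNIV :: 'a set)) - int (min_dist m r coord)))
         \<and> (\<exists>h :: 'a poly. degree h \<le> r \<and>
            int (N_places p m h) = 1 + int p * (int (card (UNIV :: 'a set)) - int (min_dist m r coord)))"
proof -
  interpret ctx p m coord using assms by (unfold_locales) auto
  have dq: "min_dist m r coord \<le> p ^ m" using d_le_q[OF assms(3,4)] .
  have A: "int (N_places p m f) \<le> 1 + int p * (int (card (UNIV :: 'a set)) - int (min_dist m r coord))"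
    if "1 \<le> degree f" "degree f \<le> r" for f :: "'a poly"
  proof -
    have c: "card {\<beta>. trace p m (poly f \<beta>) = 0} \<le> p ^ m - min_dist m r coord"
      using part1[OF assms(3,4) that] .
    hence "int (card {\<beta>. trace p m (poly f \<beta>) = 0}) \<le> int (p ^ m) - int (min_dist m r coord)"
      using dq by linarith
    hence "int p * int (card {\<beta>. trace p m (poly f \<beta>) = 0}) \<le> int p * (int (p ^ m) - int (min_dist m r coord))"
      by (intro mult_left_mono) auto
    thus ?thesis unfolding N_places_def using assms(2) by simp
  qed
  obtain h :: "'a poly" where h: "degree h \<le> r" "card {\<beta>. trace p m (poly h \<beta>) = 0} = p ^ m - min_dist m r coord"
    using part2[OF assms(3,4)] by blast
  have B: "int (N_places p m h) = 1 + int p * (int (card (UNIV :: 'a set)) - int (min_dist m r coord))"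
    unfolding N_places_def h(2) using dq assms(2) by (simp add: of_nat_diff)
  show ?thesis using A B h(1) by blast
qed

end
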